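(* Let $n$ be a positive integer, $P = \mathrm{COR}(n)$ and $Q = Q(n)$. Then there exists a spectrahedron $S \subseteq \mathbb{R}^{n\times n}$ with $P \subseteq S \subseteq Q$ and $\operatorname{xc}_{SDP}(S) \leqslant n+1$.
   Context: $\mathrm{COR}(n) = \mathrm{conv}\{bb^\intercal \mid b\in\{0,1\}^n\}$ and $Q(n) = \{x\in\mathbb{R}^{n\times n}\mid \langle 2\,\mathrm{diag}(a)-aa^\intercal, x\rangle \leqslant 1\ \forall a\in\{0,1\}^n\}$, with $\langle\cdot,\cdot\rangle$ the Frobenius inner product. A semidefinite EF of a convex set $S\subseteq\mathbb{R}^d$ is a linear system $\langle E_i, x\rangle + \langle F_i, Y\rangle = g_i$ ($i\in[k]$), $Y \in \mathcal{S}^r_+$ (the cone of $r\times r$ symmetric positive semidefinite matrices), with $E_i\in\mathbb{R}^d$ and $F_i$ symmetric $r\times r$, such that $x\in S$ iff there exists $Y\in\mathcal{S}^r_+$ satisfying the system; its size is $r$. A spectrahedron is a convex set admitting a semidefinite EF, and $\operatorname{xc}_{SDP}(S)$ is the minimum size of a semidefinite EF of $S$. *)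

theory Defs
  imports "HOL-Analysis.Analysis"
begin

text \<open>Matrices in R^{n x n} are modelled as real^'n^'n, with n = CARD('n).
  Positive semidefinite r x r matrices (r varying) are modelled as functions
  nat => nat => real, of which only the entries with indices < r matter.\<close>

definition frob :: "real^'n^'n \<Rightarrow> real^'n^'n \<Rightarrow> real" where
  "frob A X = (\<Sum>i\<in>UNIV. \<Sum>j\<in>UNIV. A$i$j * X$i$j)"

definition frob_r :: "nat \<Rightarrow> (nat \<Rightarrow> nat \<Rightarrow> real) \<Rightarrow> (nat \<Rightarrow> nat \<Rightarrow> real) \<Rightarrow> real" where
  "frob_r r F Y = (\<Sum>i<r. \<Sum>j<r. F i j * Y i j)"

definition symm_r :: "nat \<Rightarrow> (nat \<Rightarrow> nat \<Rightarrow> real) \<Rightarrow> bool" where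
  "symm_r r Y \<longleftrightarrow> (\<forall>i<r. \<forall>j<r. Y i j = Y j i)"

definition psd_r :: "nat \<Rightarrow> (nat \<Rightarrow> nat \<Rightarrow> real) \<Rightarrow> bool" where
  "psd_r r Y \<longleftrightarrow> symm_r r Y \<and>
     (\<forall>v :: nat \<Rightarrow> real. 0 \<le> (\<Sum>i<r. \<Sum>j<r. v i * Y i j * v j))"

definition binvecs :: "('n \<Rightarrow> real) set" where
  "binvecs = {b. \<forall>i. b i \<in> {0, 1}}"

definition COR :: "(real^'n^'n) set" where
  "COR = convex hull {(\<chi> i j. b i * b j) | b. b \<in> binvecs}"

definition Qset :: "(real^'n^'n) set" where
  "Qset = {x. \<forall>a\<in>binvecs.
      frob (\<chi> i j. (if i = j then 2 * a i else 0) - a i * a j) x \<le> 1}"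

definition sdp_ef :: "(real^'n^'n) set \<Rightarrow> nat \<Rightarrow> bool" where
  "sdp_ef S r \<longleftrightarrow> (\<exists>(k::nat) (E :: nat \<Rightarrow> real^'n^'n) (F :: nat \<Rightarrow> nat \<Rightarrow> nat \<Rightarrow> real) (g :: nat \<Rightarrow> real).
      (\<forall>i<k. symm_r r (F i)) \<and>
      (\<forall>x. x \<in> S \<longleftrightarrow> (\<exists>Y. psd_r r Y \<and> (\<forall>i<k. frob (E i) x + frob_r r (F i) Y = g i))))"

definition spectrahedron :: "(real^'n^'n) set \<Rightarrow> bool" where
  "spectrahedron S \<longleftrightarrow> (\<exists>r. sdp_ef S r)"

definition xc_sdp :: "(real^'n^'n) set \<Rightarrow> nat" where
  "xc_sdp S = (LEAST r. sdp_ef S r)"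

end

theory Submission
  imports Defs
begin

definition ga :: "(nat \<Rightarrow> 'n) \<Rightarrow> nat \<Rightarrow> nat \<Rightarrow> 'n" where
  "ga g p q = g ((if p = 0 then q else p) - 1)"

definition Yx :: "(nat \<Rightarrow> 'n) \<Rightarrow> real^'n^'n \<Rightarrow> nat \<Rightarrow> nat \<Rightarrow> real" where
  "Yx g x p q = (if p = 0 \<and> q = 0 then 1 else
      (x $ ga g p q $ ga g q p + x $ ga g q p $ ga g p q) / 2)"

definition dm :: "'n \<Rightarrow> 'n \<Rightarrow> real^'n^'n" where
  "dm a b = (\<chi> i j. if i = a \<and> j = b then 1 else 0)"

definition Em :: "(nat \<Rightarrow> 'n) \<Rightarrow> nat \<Rightarrow> nat \<Rightarrow> real^'n^'n" where
  "Em g p q = (if p = 0 \<and> q = 0 then 0 else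
      (1/2) *\<^sub>R (dm (ga g p q) (ga g q p) + dm (ga g q p) (ga g p q)))"

lemma frob_add: "frob (A + B) x = frob A x + frob B x"
  by (simp add: frob_def algebra_simps sum.distrib)

lemma frob_scale: "frob (c *\<^sub>R A) x = c * frob A x"
  by (simp add: frob_def sum_distrib_left algebra_simps)

lemma frob_zero: "frob 0 x = 0"
  by (simp add: frob_def)

lemma frob_dm: "frob (dm a b) x = x $ a $ b"
proof -
  have "frob (dm a b) x = (\<Sum>i\<in>UNIV. if i = a then (\<Sum>j\<in>UNIV. if j = b then x $ i $ j else 0) else 0)"
    unfolding frob_def dm_def by (intro sum.cong refl) (auto simp: if_distrib[where f="\<lambda>t. t * _"] cong: if_cong intro!: sum.cong)
  also have "\<dots> = x $ a $ b" by simp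
  finally show ?thesis .
qed

lemma Yx_frob: "\<not> (p = 0 \<and> q = 0) \<Longrightarrow> Yx g x p q = frob (Em g p q) x"
  unfolding Yx_def Em_def by (auto simp add: frob_add frob_scale frob_dm)

lemma Yx_lin:
  assumes "u + w = 1"
  shows "Yx g (u *\<^sub>R x + w *\<^sub>R y) p q = u * Yx g x p q + w * Yx g y p q"
  using assms by (simp add: Yx_def algebra_simps add_divide_distrib[symmetric])

lemma Yx_symm: "Yx g x p q = Yx g x q p"
  by (simp add: Yx_def algebra_simps)

lemma psd_r_cong:
  assumes "\<And>p q. p < r \<Longrightarrow> q < r \<Longrightarrow> Y p q = Y' p q"
  shows "psd_r r Y = psd_r r Y'"
  unfolding psd_r_def symm_r_def using assms by simp

definition Fm :: "nat \<Rightarrow> nat \<Rightarrow> nat \<Rightarrow> nat \<Rightarrow> real" where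
  "Fm p q = (\<lambda>i j. (if i = p \<and> j = q then 1/2 else 0) + (if i = q \<and> j = p then 1/2 else 0))"

lemma Fm_symm: "symm_r r (Fm p q)"
  unfolding symm_r_def
proof (intro allI impI)
  fix i j
  show "Fm p q i j = Fm p q j i"
    unfolding Fm_def by (simp only: add.commute[of "if i = p \<and> j = q then 1/2 else 0"] conj_commute)
qed

lemma dsum: "p < (r::nat) \<Longrightarrow> q < r \<Longrightarrow>
   (\<Sum>i<r. \<Sum>j<r. (if i = p \<and> j = q then c else 0) * (Y i j :: real)) = c * Y p q"
proof -
  assume a: "p < r" "q < r"
  have "(\<Sum>i<r. \<Sum>j<r. (if i = p \<and> j = q then c else 0) * Y i j)
     = (\<Sum>i<r. if i = p then (\<Sum>j<r. if j = q then c * Y i j else 0) else 0)"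
    by (intro sum.cong refl) (auto simp: if_distrib[where f="\<lambda>t. t * _"] cong: if_cong intro!: sum.cong)
  also have "\<dots> = (\<Sum>i<r. if i = p then c * Y i q else 0)"
    using a by (intro sum.cong refl) auto
  also have "\<dots> = c * Y p q" using a by (simp add: sum.delta)
  finally show ?thesis .
qed

lemma frob_r_Fm:
  assumes "symm_r r Y" "p < r" "q < r"
  shows "frob_r r (Fm p q) Y = Y p q"
proof -
  have "frob_r r (Fm p q) Y = (\<Sum>i<r. \<Sum>j<r. (if i = p \<and> j = q then 1/2 else 0) * Y i j)
       + (\<Sum>i<r. \<Sum>j<r. (if i = q \<and> j = p then 1/2 else 0) * Y i j)"
    unfolding frob_r_def Fm_def by (simp add: algebra_simps sum.distrib)
  also have "\<dots> = Y p q / 2 + Y q p / 2" using assms by (simp add: dsum)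
  also have "\<dots> = Y p q" using assms unfolding symm_r_def by simp
  finally show ?thesis .
qed

lemma quad:
  "(\<Sum>i<Suc n. \<Sum>j<Suc n. v i * Yx g x i j * v j) = v 0 * v 0
     + 2 * v 0 * (\<Sum>k<n. v (Suc k) * x$g k$g k)
     + (\<Sum>k<n. \<Sum>l<n. v (Suc k) * ((x$g k$g l + x$g l$g k)/2) * v (Suc l))"
proof -
  have "(\<Sum>i<Suc n. \<Sum>j<Suc n. v i * Yx g x i j * v j)
     = (v 0 * v 0 + (\<Sum>l<n. v 0 * Yx g x 0 (Suc l) * v (Suc l)))
      + (\<Sum>k<n. v (Suc k) * Yx g x (Suc k) 0 * v 0 + (\<Sum>l<n. v (Suc k) * Yx g x (Suc k) (Suc l) * v (Suc l)))"
    by (simp only: sum.lessThan_Suc_shift) (simp add: Yx_def)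
  also have "\<dots> = (v 0 * v 0 + (\<Sum>l<n. v 0 * (x$g l$g l) * v (Suc l)))
      + (\<Sum>k<n. v (Suc k) * (x$g k$g k) * v 0 + (\<Sum>l<n. v (Suc k) * ((x$g k$g l + x$g l$g k)/2) * v (Suc l)))"
    by (simp add: Yx_def ga_def)
  also have "\<dots> = v 0 * v 0
     + 2 * v 0 * (\<Sum>k<n. v (Suc k) * x$g k$g k)
     + (\<Sum>k<n. \<Sum>l<n. v (Suc k) * ((x$g k$g l + x$g l$g k)/2) * v (Suc l))"
    by (simp add: sum.distrib sum_distrib_left algebra_simps)
  finally show ?thesis .
qed
lemma reidx:
  assumes "bij_betw g {..<CARD('n)} (UNIV :: 'n::finite set)"
  shows "(\<Sum>i\<in>(UNIV::'n set). h i) = (\<Sum>k<CARD('n). h (g k))"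
  using sum.reindex_bij_betw[OF assms, of h] by simp

lemma S_ef:
  "sdp_ef {x :: real^'n^'n. psd_r r (Yx g x)} r"
proof -
  define E :: "nat \<Rightarrow> real^'n^'n" where "E c = - Em g (c div r) (c mod r)" for c
  define F where "F c = Fm (c div r) (c mod r)" for c
  define gg :: "nat \<Rightarrow> real" where "gg c = (if c div r = 0 \<and> c mod r = 0 then 1 else 0)" for c
  have key: "frob (E c) x + frob_r r (F c) Y = gg c \<longleftrightarrow> Y (c div r) (c mod r) = Yx g x (c div r) (c mod r)"
    if "symm_r r Y" "c < r * r" for c x Y
  proof -
    have r0: "0 < r" using that(2) by (cases r) auto
    have lt: "c div r < r" "c mod r < r"
      using that(2) r0 by (simp add: less_mult_imp_div_less) (simp add: r0)
    have "frob (E c) x = - frob (Em g (c div r) (c mod r)) x"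
      unfolding E_def frob_def by (simp add: sum_negf)
    moreover have "frob_r r (F c) Y = Y (c div r) (c mod r)"
      unfolding F_def using frob_r_Fm[OF that(1) lt] .
    ultimately show ?thesis
    proof (cases "c div r = 0 \<and> c mod r = 0")
      case True
      then show ?thesis using \<open>frob (E c) x = _\<close> \<open>frob_r r (F c) Y = _\<close>
        by (simp add: gg_def Em_def frob_zero Yx_def)
    next
      case False
      have "gg c = 0" using False unfolding gg_def by meson
      then show ?thesis using \<open>frob (E c) x = _\<close> \<open>frob_r r (F c) Y = _\<close>
        by (simp add: Yx_frob[OF False])
    qed
  qed
  show ?thesis
    unfolding sdp_ef_def
  proof (intro exI[of _ "r * r"] exI[of _ E] exI[of _ F] exI[of _ gg] conjI allI impI)
    show "symm_r r (F i)" for i unfolding F_def by (rule Fm_symm)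
  next
    fix x :: "real^'n^'n"
    show "x \<in> {x. psd_r r (Yx g x)} \<longleftrightarrow>
       (\<exists>Y. psd_r r Y \<and> (\<forall>i<r * r. frob (E i) x + frob_r r (F i) Y = gg i))"
    proof
      assume "x \<in> {x. psd_r r (Yx g x)}"
      hence ps: "psd_r r (Yx g x)" by simp
      hence sy: "symm_r r (Yx g x)" unfolding psd_r_def by simp
      show "\<exists>Y. psd_r r Y \<and> (\<forall>i<r * r. frob (E i) x + frob_r r (F i) Y = gg i)"
        using ps key[OF sy] by blast
    next
      assume "\<exists>Y. psd_r r Y \<and> (\<forall>i<r * r. frob (E i) x + frob_r r (F i) Y = gg i)"
      then obtain Y where ps: "psd_r r Y" and eq: "\<forall>i<r * r. frob (E i) x + frob_r r (F i) Y = gg i"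
        by blast
      have sy: "symm_r r Y" using ps unfolding psd_r_def by simp
      have "Y p q = Yx g x p q" if "p < r" "q < r" for p q
      proof -
        have c: "p * r + q < r * r"
        proof -
          have "p * r + q < (p + 1) * r" using that by simp
          also have "\<dots> \<le> r * r" using that by (intro mult_le_mono1) simp
          finally show ?thesis .
        qed
        have d: "(p * r + q) div r = p" "(p * r + q) mod r = q" using that by auto
        show ?thesis using key[where x=x, OF sy c] eq c d by simp
      qed
      hence "psd_r r (Yx g x)" using ps psd_r_cong by metis
      thus "x \<in> {x. psd_r r (Yx g x)}" by simp
    qed
  qed
qed

lemma S_convex: "convex {x :: real^'n^'n. psd_r r (Yx g x)}"
  unfolding convex_def
proof (intro ballI allI impI)
  fix x y :: "real^'n^'n" and u w :: real
  assume x: "x \<in> {x. psd_r r (Yx g x)}" and y: "y \<in> {x. psd_r r (Yx g x)}"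
    and u: "0 \<le> u" and w: "0 \<le> w" and uw: "u + w = 1"
  have lin: "Yx g (u *\<^sub>R x + w *\<^sub>R y) i j = u * Yx g x i j + w * Yx g y i j" for i j
    using Yx_lin[OF uw] .
  have px: "psd_r r (Yx g x)" and py: "psd_r r (Yx g y)" using x y by auto
  have "psd_r r (Yx g (u *\<^sub>R x + w *\<^sub>R y))"
    unfolding psd_r_def
  proof (intro conjI allI)
    show "symm_r r (Yx g (u *\<^sub>R x + w *\<^sub>R y))"
      unfolding symm_r_def using Yx_symm by metis
  next
    fix v :: "nat \<Rightarrow> real"
    have "(\<Sum>i<r. \<Sum>j<r. v i * Yx g (u *\<^sub>R x + w *\<^sub>R y) i j * v j)
        = u * (\<Sum>i<r. \<Sum>j<r. v i * Yx g x i j * v j) + w * (\<Sum>i<r. \<Sum>j<r. v i * Yx g y i j * v j)"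
    proof -
      have e: "v i * Yx g (u *\<^sub>R x + w *\<^sub>R y) i j * v j
          = u * (v i * Yx g x i j * v j) + w * (v i * Yx g y i j * v j)" for i j
        unfolding lin by (simp add: algebra_simps)
      show ?thesis unfolding e by (simp only: sum.distrib sum_distrib_left)
    qed
    moreover have "0 \<le> (\<Sum>i<r. \<Sum>j<r. v i * Yx g x i j * v j)"
      using px unfolding psd_r_def by blast
    moreover have "0 \<le> (\<Sum>i<r. \<Sum>j<r. v i * Yx g y i j * v j)"
      using py unfolding psd_r_def by blast
    ultimately show "0 \<le> (\<Sum>i<r. \<Sum>j<r. v i * Yx g (u *\<^sub>R x + w *\<^sub>R y) i j * v j)"
      using u w by simp
  qed
  thus "u *\<^sub>R x + w *\<^sub>R y \<in> {x. psd_r r (Yx g x)}" by simp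
qed

lemma COR_sub:
  "COR \<subseteq> {x :: real^'n^'n. psd_r (Suc CARD('n)) (Yx g x)}"
  unfolding COR_def
proof (rule hull_minimal[where S=convex])
  show "{(\<chi> i j. b i * b j) | b. b \<in> binvecs} \<subseteq> {x :: real^'n^'n. psd_r (Suc CARD('n)) (Yx g x)}"
  proof clarify
    fix b :: "'n \<Rightarrow> real" assume b: "b \<in> binvecs"
    have bb: "b i * b i = b i" for i using b unfolding binvecs_def by (cases "b i = 0") auto
    let ?x = "(\<chi> i j. b i * b j) :: real^'n^'n"
    show "psd_r (Suc CARD('n)) (Yx g ?x)"
      unfolding psd_r_def
    proof (intro conjI allI)
      show "symm_r (Suc CARD('n)) (Yx g ?x)" unfolding symm_r_def using Yx_symm by metis
    next
      fix v :: "nat \<Rightarrow> real"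
      define T where "T = (\<Sum>k<CARD('n). v (Suc k) * b (g k))"
      have "(\<Sum>i<Suc CARD('n). \<Sum>j<Suc CARD('n). v i * Yx g ?x i j * v j)
          = v 0 * v 0 + 2 * v 0 * (\<Sum>k<CARD('n). v (Suc k) * (b (g k) * b (g k)))
            + (\<Sum>k<CARD('n). \<Sum>l<CARD('n). v (Suc k) * ((b (g k) * b (g l) + b (g l) * b (g k))/2) * v (Suc l))"
        by (subst quad) simp
      also have "\<dots> = v 0 * v 0 + 2 * v 0 * T + T * T"
      proof -
        have 1: "(\<Sum>k<CARD('n). v (Suc k) * (b (g k) * b (g k))) = T"
          unfolding T_def by (simp only: bb)
        have 2: "T * T = (\<Sum>k<CARD('n). \<Sum>l<CARD('n). v (Suc k) * ((b (g k) * b (g l) + b (g l) * b (g k))/2) * v (Suc l))"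
          unfolding T_def sum_product
          by (intro sum.cong refl) (simp add: algebra_simps)
        show ?thesis using 1 2 by simp
      qed
      also have "\<dots> = (v 0 + T)^2" by (simp add: power2_eq_square algebra_simps)
      finally show "0 \<le> (\<Sum>i<Suc CARD('n). \<Sum>j<Suc CARD('n). v i * Yx g ?x i j * v j)"
        by simp
    qed
  qed
qed (rule S_convex)

lemma Q_sub:
  assumes bij: "bij_betw g {..<CARD('n)} (UNIV :: 'n::finite set)"
  shows "{x :: real^'n^'n. psd_r (Suc CARD('n)) (Yx g x)} \<subseteq> Qset"
proof (clarify, unfold Qset_def, clarify)
  fix x :: "real^'n^'n" and a :: "'n \<Rightarrow> real"
  assume ps: "psd_r (Suc CARD('n)) (Yx g x)" and a: "a \<in> binvecs"
  define v where "v p = (if p = 0 then 1 else - a (g (p - 1)))" for p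
  define A where "A = (\<Sum>k<CARD('n). a (g k) * x$g k$g k)"
  define D where "D = (\<Sum>k<CARD('n). \<Sum>l<CARD('n). a (g k) * a (g l) * x$g k$g l)"
  have "0 \<le> (\<Sum>i<Suc CARD('n). \<Sum>j<Suc CARD('n). v i * Yx g x i j * v j)"
    using ps unfolding psd_r_def by blast
  also have "\<dots> = 1 - 2 * A + (\<Sum>k<CARD('n). \<Sum>l<CARD('n). a (g k) * a (g l) * ((x$g k$g l + x$g l$g k)/2))"
    unfolding quad A_def by (simp add: v_def sum_negf algebra_simps)
  also have "(\<Sum>k<CARD('n). \<Sum>l<CARD('n). a (g k) * a (g l) * ((x$g k$g l + x$g l$g k)/2))
      = D / 2 + (\<Sum>k<CARD('n). \<Sum>l<CARD('n). a (g k) * a (g l) * x$g l$g k) / 2"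
    unfolding D_def by (simp add: sum.distrib sum_divide_distrib algebra_simps add_divide_distrib)
  also have "(\<Sum>k<CARD('n). \<Sum>l<CARD('n). a (g k) * a (g l) * x$g l$g k) = D"
    unfolding D_def by (subst sum.swap) (simp add: mult.commute)
  finally have ineq: "0 \<le> 1 - 2 * A + D" by simp
  have "frob (\<chi> i j. (if i = j then 2 * a i else 0) - a i * a j) x
      = (\<Sum>i\<in>UNIV. \<Sum>j\<in>UNIV. (if i = j then 2 * a i * x$i$j else 0)) - (\<Sum>i\<in>UNIV. \<Sum>j\<in>UNIV. a i * a j * x$i$j)"
  proof -
    have t: "((\<chi> i j. (if i = j then 2 * a i else 0) - a i * a j) :: real^'n^'n) $ i $ j * x$i$j
       = (if i = j then 2 * a i * x$i$j else 0) - a i * a j * x$i$j" for i j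
      by (simp add: algebra_simps)
    show ?thesis unfolding frob_def t by (simp only: sum_subtractf)
  qed
  also have "\<dots> = 2 * (\<Sum>i\<in>UNIV. a i * x$i$i) - (\<Sum>i\<in>UNIV. \<Sum>j\<in>UNIV. a i * a j * x$i$j)"
  proof -
    have h: "(\<Sum>j\<in>UNIV. if i = j then 2 * a i * x$i$j else 0) = 2 * (a i * x$i$i)" for i
      by simp
    show ?thesis by (simp only: h sum_distrib_left)
  qed
  also have "\<dots> = 2 * A - D"
    unfolding A_def D_def reidx[OF bij] by simp
  finally show "frob (\<chi> i j. (if i = j then 2 * a i else 0) - a i * a j) x \<le> 1"
    using ineq by simp
qed

theorem lemma9:
  shows "\<exists>S :: (real^'n^'n) set. spectrahedron S \<and> COR \<subseteq> S \<and> S \<subseteq> Qset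
           \<and> xc_sdp S \<le> CARD('n) + 1"
proof -
  obtain g where bij: "bij_betw g {0..<card (UNIV :: 'n set)} (UNIV :: 'n set)"
    using ex_bij_betw_nat_finite[of "UNIV :: 'n set"] by auto
  hence bij': "bij_betw g {..<CARD('n)} (UNIV :: 'n set)" by (simp add: atLeast0LessThan)
  let ?S = "{x :: real^'n^'n. psd_r (Suc CARD('n)) (Yx g x)}"
  have ef: "sdp_ef ?S (Suc CARD('n))" by (rule S_ef)
  show ?thesis
  proof (intro exI[of _ ?S] conjI)
    show "spectrahedron ?S" unfolding spectrahedron_def using ef by blast
    show "COR \<subseteq> ?S" by (rule COR_sub)
    show "?S \<subseteq> Qset" by (rule Q_sub[OF bij'])
    show "xc_sdp ?S \<le> CARD('n) + 1" unfolding xc_sdp_def using Least_le[of "sdp_ef ?S", OF ef] by simp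
  qed
qed

end
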